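(* Let $N$ be a sub-sound pWF net, $M$ a sub-sound tWF net whose node set is disjoint from that of $N$, and $t^*$ a transition of $N$. Then the pWF net $N\otimes_{t^*}M$ is sub-sound.
   Context: Petri nets and markings. A Petri net is a triple $(P,T,F)$ with $P$ a finite set of places, $T$ a finite set of transitions, $P\cap T=\emptyset$, and $F\subseteq (P\times T)\cup(T\times P)$. For a node $x$, $\bullet x=\{y\mid (y,x)\in F\}$, $x\bullet=\{y\mid (x,y)\in F\}$. A marking is a multiset over $P$ (a function $P\to\mathbb N$); sets of places are identified with bags of multiplicity one, $+,-,\le$ are pointwise, and $k.m$ is the sum of $k$ copies of $m$. Transition $t$ is enabled at $m$ iff $\bullet t\le m$, firing gives $m-\bullet t+t\bullet$, and $m\xrightarrow{*}m'$ denotes reachability by a finite (possibly empty) firing sequence. Workflow nets. A pWF net is $(P,T,F,I,O)$ with $(P,T,F)$ a Petri net, $I,O\subseteq P$ non-empty, every node reachable by a directed path from some node of $I$, and some node of $O$ reachable from every node. A tWF net is the same with $I,O$ non-empty subsets of $T$. Input nodes may have incoming edges and output nodes outgoing edges. The place-completion $\mathrm{pc}(N)$ of a tWF net $N=(P,T,F,I,O)$ is obtained by adding two fresh places $p_i,p_o$ with edges $(p_i,t)$ for all $t\in I$ and $(t,p_o)$ for all $t\in O$, and taking input set $\{p_i\}$ and output set $\{p_o\}$. Sub-soundness. A pWF net is sub-sound if for all integers $k\ge k'\ge 0$ and every marking $m'$: if $k.I\xrightarrow{*}m'+k'.O$ then $m'\xrightarrow{*}(k-k').O$. A tWF net is sub-sound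 iff its place-completion is. Transition substitution. For a WF net $N=(P,T,F,I,O)$ and a tWF net $M=(P',T',F',I',O')$ with disjoint node sets and $t\in T$, $N\otimes_t M$ is obtained from $N$ by deleting $t$ and all edges incident to $t$, adding all nodes and edges of $M$, adding an edge $(q,t')$ for each $q\in\bullet_N t$ and $t'\in I'$, and an edge $(t',q)$ for each $t'\in O'$ and $q\in t\bullet_N$; its input set is $(I\setminus\{t\})\cup I'$ if $t\in I$ and $I$ otherwise, and its output set is $(O\setminus\{t\})\cup O'$ if $t\in O$ and $O$ otherwise. *)

theory Defs
  imports Main "HOL-Library.Multiset"
begin

record 'a wfnet =
  places :: "'a set"
  trans  :: "'a set"
  flow   :: "('a \<times> 'a) set"
  inp    :: "'a set"
  out    :: "'a set"

definition nodes :: "('a, 'b) wfnet_scheme \<Rightarrow> 'a set" where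
  "nodes N = places N \<union> trans N"

definition petri_net :: "('a, 'b) wfnet_scheme \<Rightarrow> bool" where
  "petri_net N \<longleftrightarrow> finite (places N) \<and> finite (trans N) \<and>
     places N \<inter> trans N = {} \<and>
     flow N \<subseteq> (places N \<times> trans N) \<union> (trans N \<times> places N)"

definition wf_paths :: "('a, 'b) wfnet_scheme \<Rightarrow> bool" where
  "wf_paths N \<longleftrightarrow> inp N \<noteq> {} \<and> out N \<noteq> {} \<and>
     (\<forall>x\<in>nodes N. \<exists>i\<in>inp N. (i, x) \<in> (flow N)\<^sup>*) \<and>
     (\<forall>x\<in>nodes N. \<exists>y\<in>out N. (x, y) \<in> (flow N)\<^sup>*)"

definition pWF :: "('a, 'b) wfnet_scheme \<Rightarrow> bool" where
  "pWF N \<longleftrightarrow> petri_net N \<and> inp N \<subseteq> places N \<and> out N \<subseteq> places N \<and> wf_paths N"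

definition tWF :: "('a, 'b) wfnet_scheme \<Rightarrow> bool" where
  "tWF N \<longleftrightarrow> petri_net N \<and> inp N \<subseteq> trans N \<and> out N \<subseteq> trans N \<and> wf_paths N"

definition preset :: "('a, 'b) wfnet_scheme \<Rightarrow> 'a \<Rightarrow> 'a multiset" where
  "preset N x = mset_set {y. (y, x) \<in> flow N}"

definition postset :: "('a, 'b) wfnet_scheme \<Rightarrow> 'a \<Rightarrow> 'a multiset" where
  "postset N x = mset_set {y. (x, y) \<in> flow N}"

definition fire_step :: "('a, 'b) wfnet_scheme \<Rightarrow> 'a multiset \<Rightarrow> 'a multiset \<Rightarrow> bool" where
  "fire_step N m m' \<longleftrightarrow> (\<exists>t\<in>trans N. preset N t \<subseteq># m \<and> m' = m - preset N t + postset N t)"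

definition reach :: "('a, 'b) wfnet_scheme \<Rightarrow> 'a multiset \<Rightarrow> 'a multiset \<Rightarrow> bool" where
  "reach N = (fire_step N)\<^sup>*\<^sup>*"

text \<open>Sub-soundness of a pWF net (sets identified with multiplicity-one bags).\<close>
definition sub_sound :: "('a, 'b) wfnet_scheme \<Rightarrow> bool" where
  "sub_sound N \<longleftrightarrow>
    (\<forall>k k' :: nat. \<forall>m'. k' \<le> k \<longrightarrow> set_mset m' \<subseteq> places N \<longrightarrow>
       reach N (repeat_mset k (mset_set (inp N))) (m' + repeat_mset k' (mset_set (out N))) \<longrightarrow>
       reach N m' (repeat_mset (k - k') (mset_set (out N))))"

text \<open>Place completion: fresh places are Inr False (p_i) and Inr True (p_o).\<close>
definition place_completion :: "'a wfnet \<Rightarrow> ('a + bool) wfnet" where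
  "place_completion N =
    \<lparr> places = Inl ` places N \<union> {Inr False, Inr True},
      trans = Inl ` trans N,
      flow = map_prod Inl Inl ` flow N
             \<union> {(Inr False, Inl t) | t. t \<in> inp N}
             \<union> {(Inl t, Inr True) | t. t \<in> out N},
      inp = {Inr False},
      out = {Inr True} \<rparr>"

definition tWF_sub_sound :: "'a wfnet \<Rightarrow> bool" where
  "tWF_sub_sound N \<longleftrightarrow> sub_sound (place_completion N)"

definition subst_trans :: "'a wfnet \<Rightarrow> 'a \<Rightarrow> 'a wfnet \<Rightarrow> 'a wfnet" where
  "subst_trans N t M =
    \<lparr> places = places N \<union> places M,
      trans = (trans N - {t}) \<union> trans M,
      flow = {e \<in> flow N. fst e \<noteq> t \<and> snd e \<noteq> t} \<union> flow M
             \<union> {(q, t') | q t'. (q, t) \<in> flow N \<and> t' \<in> inp M}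
             \<union> {(t', q) | t' q. t' \<in> out M \<and> (t, q) \<in> flow N},
      inp = (if t \<in> inp N then (inp N - {t}) \<union> inp M else inp N),
      out = (if t \<in> out N then (out N - {t}) \<union> out M else out N) \<rparr>"

end

theory Submission
  imports Defs
begin

lemma in_mset_setD: "x \<in># mset_set A \<Longrightarrow> x \<in> A"
  by (cases "finite A") auto

lemma in_repD: "x \<in># repeat_mset k A \<Longrightarrow> x \<in># A"
  by (metis count_repeat_mset mult_zero_right not_in_iff)

lemma fire_mono: "fire_step N x y \<Longrightarrow> fire_step N (x + z) (y + z)"
proof -
  assume "fire_step N x y"
  then obtain u where u: "u \<in> trans N" "preset N u \<subseteq># x" "y = x - preset N u + postset N u"
    by (auto simp: fire_step_def)
  have "x + z - preset N u + postset N u = y + z"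
  proof (rule multiset_eqI)
    fix a have "count (preset N u) a \<le> count x a" using u(2) by (simp add: subseteq_mset_def)
    then show "count (x + z - preset N u + postset N u) a = count (y + z) a" using u(3) by simp
  qed
  moreover have "preset N u \<subseteq># x + z" using u(2) by (meson mset_subset_eq_add_left subset_mset.order_trans)
  ultimately show ?thesis using u(1) unfolding fire_step_def by metis
qed

lemma reach_mono: "reach N x y \<Longrightarrow> reach N (x + z) (y + z)"
  unfolding reach_def
  by (induction rule: rtranclp_induct) (auto intro: rtranclp.rtrancl_into_rtrancl fire_mono)

lemma reach_trans: "reach N x y \<Longrightarrow> reach N y z \<Longrightarrow> reach N x z"
  unfolding reach_def by auto

lemma reach_refl: "reach N x x"
  unfolding reach_def by auto

lemma reach_fire: "u \<in> trans N \<Longrightarrow> preset N u \<subseteq># m \<Longrightarrow> m' = m - preset N u + postset N u \<Longrightarrow> reach N m m'"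
  unfolding reach_def fire_step_def by (rule r_into_rtranclp) blast

lemma reach_places:
  assumes "flow N \<subseteq> (places N \<times> trans N) \<union> (trans N \<times> places N)"
    and "places N \<inter> trans N = {}"
  shows "reach N x y \<Longrightarrow> set_mset x \<subseteq> places N \<Longrightarrow> set_mset y \<subseteq> places N"
  unfolding reach_def
proof (induction rule: rtranclp_induct)
  case base then show ?case by simp
next
  case (step y z)
  then obtain u where u: "u \<in> trans N" "preset N u \<subseteq># y" "z = y - preset N u + postset N u"
    by (auto simp: fire_step_def)
  have "set_mset (postset N u) \<subseteq> places N"
    using assms u(1) by (auto simp: postset_def dest!: in_mset_setD)
  then show ?case using step u(3) by (auto dest: in_diffD)
qed

locale ctx =
  fixes N M :: "'a wfnet" and t :: 'a
  assumes pN: "pWF N" and sN: "sub_sound N" and tM: "tWF M" and sM: "tWF_sub_sound M"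
    and disj: "nodes N \<inter> nodes M = {}" and tT: "t \<in> trans N"
begin

abbreviation "S \<equiv> subst_trans N t M"
abbreviation "pc \<equiv> place_completion M"
abbreviation "pt \<equiv> preset N t"
abbreviation "qt \<equiv> postset N t"

lemma finPN: "finite (places N)" and finTN: "finite (trans N)" and djN: "places N \<inter> trans N = {}"
  and flN: "flow N \<subseteq> (places N \<times> trans N) \<union> (trans N \<times> places N)"
  and inN: "inp N \<subseteq> places N" and outN: "out N \<subseteq> places N"
  using pN by (auto simp: pWF_def petri_net_def)

lemma finPM: "finite (places M)" and finTM: "finite (trans M)" and djM: "places M \<inter> trans M = {}"
  and flM: "flow M \<subseteq> (places M \<times> trans M) \<union> (trans M \<times> places M)"
  and inM: "inp M \<subseteq> trans M" and outM: "out M \<subseteq> trans M"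
  using tM by (auto simp: tWF_def petri_net_def)

lemma flowN: "(x, y) \<in> flow N \<Longrightarrow> (x \<in> places N \<and> y \<in> trans N) \<or> (x \<in> trans N \<and> y \<in> places N)"
  using flN by auto
lemma flowM: "(x, y) \<in> flow M \<Longrightarrow> (x \<in> places M \<and> y \<in> trans M) \<or> (x \<in> trans M \<and> y \<in> places M)"
  using flM by auto

lemma disj': "x \<in> places N \<union> trans N \<Longrightarrow> x \<in> places M \<union> trans M \<Longrightarrow> False"
  using disj by (auto simp: nodes_def)

lemma finite_pre_N: "finite {y. (y, u) \<in> flow N}"
  by (rule finite_subset[of _ "places N \<union> trans N"]) (use flowN finPN finTN in auto)
lemma finite_post_N: "finite {y. (u, y) \<in> flow N}"
  by (rule finite_subset[of _ "places N \<union> trans N"]) (use flowN finPN finTN in auto)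
lemma finite_pre_M: "finite {y. (y, u) \<in> flow M}"
  by (rule finite_subset[of _ "places M \<union> trans M"]) (use flowM finPM finTM in auto)
lemma finite_post_M: "finite {y. (u, y) \<in> flow M}"
  by (rule finite_subset[of _ "places M \<union> trans M"]) (use flowM finPM finTM in auto)

lemma tnotinp: "t \<notin> inp N" "t \<notin> out N"
  using tT inN outN djN by auto

lemma S_simps: "trans S = (trans N - {t}) \<union> trans M" "places S = places N \<union> places M"
  "inp S = inp N" "out S = out N"
  using tnotinp by (auto simp: subst_trans_def)

lemma preS_M: assumes u: "u \<in> trans M"
  shows "preset S u = preset M u + (if u \<in> inp M then pt else {#})"
proof -
  have "{y. (y, u) \<in> flow S} = {y. (y, u) \<in> flow M} \<union> (if u \<in> inp M then {y. (y, t) \<in> flow N} else {})"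
    using u disj' flowN flowM by (auto simp: subst_trans_def)
  moreover have "{y. (y, u) \<in> flow M} \<inter> {y. (y, t) \<in> flow N} = {}"
    using disj' flowN flowM by blast
  ultimately show ?thesis
    unfolding preset_def using finite_pre_M finite_pre_N by (auto simp: mset_set_Union)
qed

lemma postS_M: assumes u: "u \<in> trans M"
  shows "postset S u = postset M u + (if u \<in> out M then qt else {#})"
proof -
  have "{y. (u, y) \<in> flow S} = {y. (u, y) \<in> flow M} \<union> (if u \<in> out M then {y. (t, y) \<in> flow N} else {})"
    using u disj' flowN flowM by (auto simp: subst_trans_def)
  moreover have "{y. (u, y) \<in> flow M} \<inter> {y. (t, y) \<in> flow N} = {}"
    using disj' flowN flowM by blast
  ultimately show ?thesis
    unfolding postset_def using finite_post_M finite_post_N by (auto simp: mset_set_Union)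
qed

lemma preS_N: assumes u: "u \<in> trans N" "u \<noteq> t"
  shows "preset S u = preset N u"
proof -
  have "{y. (y, u) \<in> flow S} = {y. (y, u) \<in> flow N}"
    using u disj' flowN flowM tT djN inM outM by (auto simp: subst_trans_def) blast+
  then show ?thesis unfolding preset_def by simp
qed

lemma postS_N: assumes u: "u \<in> trans N" "u \<noteq> t"
  shows "postset S u = postset N u"
proof -
  have "{y. (u, y) \<in> flow S} = {y. (u, y) \<in> flow N}"
    using u disj' flowN flowM tT djN inM outM by (auto simp: subst_trans_def) blast+
  then show ?thesis unfolding postset_def by simp
qed

lemma count_Inl_Inl[simp]: "count (image_mset Inl A) (Inl a) = count A a"
  by (induction A) auto
lemma count_Inl_Inr[simp]: "count (image_mset Inl A) (Inr b) = 0"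
  by (induction A) auto

definition pr :: "('a + bool) multiset \<Rightarrow> 'a multiset" where
  "pr x = image_mset projl (filter_mset isl x)"

lemma count_pr[simp]: "count (pr x) a = count x (Inl a)"
  unfolding pr_def by (induction x) (auto simp: isl_def)

lemma pc_simps: "trans pc = Inl ` trans M" "places pc = Inl ` places M \<union> {Inr False, Inr True}"
  "inp pc = {Inr False}" "out pc = {Inr True}"
  by (auto simp: place_completion_def)

lemma prePC: assumes u: "u \<in> trans M"
  shows "preset pc (Inl u) = image_mset Inl (preset M u) + (if u \<in> inp M then {#Inr False#} else {#})"
proof -
  have "{y. (y, Inl u) \<in> flow pc} = Inl ` {y. (y, u) \<in> flow M} \<union> (if u \<in> inp M then {Inr False} else {})"
    by (auto simp: place_completion_def)
  note eq = this
  have fin: "finite (Inl ` {y. (y, u) \<in> flow M})" using finite_pre_M by blast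
  have nin: "Inr False \<notin> Inl ` {y. (y, u) \<in> flow M}" by auto
  show ?thesis unfolding preset_def eq
    using mset_set.insert[OF fin nin] by (simp add: image_mset_mset_set)
qed

lemma postPC: assumes u: "u \<in> trans M"
  shows "postset pc (Inl u) = image_mset Inl (postset M u) + (if u \<in> out M then {#Inr True#} else {#})"
proof -
  have "{y. (Inl u, y) \<in> flow pc} = Inl ` {y. (u, y) \<in> flow M} \<union> (if u \<in> out M then {Inr True} else {})"
    by (auto simp: place_completion_def)
  note eq = this
  have fin: "finite (Inl ` {y. (u, y) \<in> flow M})" using finite_post_M by blast
  have nin: "Inr True \<notin> Inl ` {y. (u, y) \<in> flow M}" by auto
  show ?thesis unfolding postset_def eq
    using mset_set.insert[OF fin nin] by (simp add: image_mset_mset_set)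
qed

lemma pc_flow: "flow pc \<subseteq> (places pc \<times> trans pc) \<union> (trans pc \<times> places pc)"
  using flM inM outM by (auto simp: place_completion_def)

lemma pc_dj: "places pc \<inter> trans pc = {}"
  using djM by (auto simp: place_completion_def)

lemma po_mono: "reach pc x y \<Longrightarrow> count x (Inr True) \<le> count y (Inr True)"
  unfolding reach_def
proof (induction rule: rtranclp_induct)
  case (step y z)
  then obtain v where v: "v \<in> trans pc" "preset pc v \<subseteq># y" "z = y - preset pc v + postset pc v"
    by (auto simp: fire_step_def)
  obtain u where u: "u \<in> trans M" "v = Inl u" using v(1) by (auto simp: pc_simps)
  show ?case using step v(3) u prePC[OF u(1)] by auto
qed simp

lemma le_io: assumes r: "reach pc (repeat_mset i {#Inr False#}) (x + repeat_mset j {#Inr True#})"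
  shows "j \<le> i"
proof (rule ccontr)
  assume "\<not> j \<le> i"
  have pl: "set_mset (x + repeat_mset j {#Inr True#}) \<subseteq> places pc"
    using reach_places[OF pc_flow pc_dj r] by (auto simp: pc_simps)
  let ?m = "x + repeat_mset (j - i) {#Inr True#}"
  have "?m + repeat_mset i {#Inr True#} = x + repeat_mset j {#Inr True#}"
    using \<open>\<not> j \<le> i\<close> by (auto intro!: multiset_eqI)
  moreover have "set_mset ?m \<subseteq> places pc" using pl \<open>\<not> j \<le> i\<close> by (auto simp: pc_simps)
  moreover have H: "\<forall>k k' m'. k' \<le> k \<longrightarrow> set_mset m' \<subseteq> places pc \<longrightarrow>
       reach pc (repeat_mset k (mset_set {Inr False})) (m' + repeat_mset k' (mset_set {Inr True})) \<longrightarrow>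
       reach pc m' (repeat_mset (k - k') (mset_set {Inr True}))"
    using sM unfolding tWF_sub_sound_def sub_sound_def pc_simps .
  ultimately have "reach pc ?m (repeat_mset (i - i) (mset_set {Inr True}))"
    using r by (simp only: mset_set.insert mset_set.empty finite.emptyI empty_iff not_False_eq_True)
  from po_mono[OF this] \<open>\<not> j \<le> i\<close> show False by simp
qed

lemma lift:
  assumes "reach pc x y"
  shows "count y (Inr False) \<le> count x (Inr False) \<and> count x (Inr True) \<le> count y (Inr True) \<and>
    (\<forall>a. reach S (a + repeat_mset (count x (Inr False) - count y (Inr False)) pt + pr x)
                   (a + repeat_mset (count y (Inr True) - count x (Inr True)) qt + pr y))"
proof -
  have "(fire_step pc)\<^sup>*\<^sup>* x y" using assms by (simp add: reach_def)
  then show ?thesis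
  proof (induction rule: rtranclp_induct)
    case base then show ?case by (simp add: reach_refl)
  next
    case (step y z)
    then obtain v where v: "v \<in> trans pc" "preset pc v \<subseteq># y" "z = y - preset pc v + postset pc v"
      by (auto simp: fire_step_def)
    obtain u where u: "u \<in> trans M" "v = Inl u" using v(1) by (auto simp: pc_simps)
    define P where "P = preset M u"
    define Q where "Q = postset M u"
    define ip where "ip = (u \<in> inp M)"
    define op where "op = (u \<in> out M)"
    have hpre: "preset pc v = image_mset Inl P + (if ip then {#Inr False#} else {#})"
      using prePC[OF u(1)] u(2) by (simp add: P_def ip_def)
    have hpost: "postset pc v = image_mset Inl Q + (if op then {#Inr True#} else {#})"
      using postPC[OF u(1)] u(2) by (simp add: Q_def op_def)
    have sub: "\<And>b. count (preset pc v) b \<le> count y b" using v(2) by (simp add: subseteq_mset_def)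
    have subP: "\<And>b. count P b \<le> count (pr y) b" proof -
      fix b show "count P b \<le> count (pr y) b" using sub[of "Inl b"] by (cases ip) (simp_all add: hpre)
    qed
    have ipy: "ip \<Longrightarrow> 1 \<le> count y (Inr False)" using sub[of "Inr False"] by (simp add: hpre)
    have cz: "count z (Inr False) = count y (Inr False) - (if ip then 1 else 0)"
      using v(3) ipy by (simp add: hpre hpost)
    have oz: "count z (Inr True) = count y (Inr True) + (if op then 1 else 0)"
      using v(3) by (simp add: hpre hpost)
    have prz: "\<And>b. count (pr z) b = count (pr y) b - count P b + count Q b"
      using v(3) by (simp add: hpre hpost)
    have preS: "preset S u = P + (if ip then pt else {#})" using preS_M[OF u(1)] by (simp add: P_def ip_def)
    have postS: "postset S u = Q + (if op then qt else {#})" using postS_M[OF u(1)] by (simp add: Q_def op_def)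
    have uS: "u \<in> trans S" using u(1) by (simp add: S_simps)
    let ?cx = "count x (Inr False)" and ?cy = "count y (Inr False)" and ?cz = "count z (Inr False)"
    let ?ox = "count x (Inr True)" and ?oy = "count y (Inr True)" and ?oz = "count z (Inr True)"
    have c1: "?cz \<le> ?cx" and c2: "?ox \<le> ?oz" using step.IH cz oz by auto
    have c3: "?cx - ?cz = ?cx - ?cy + (if ip then 1 else 0)" using step.IH cz ipy by auto
    have c4: "?oz - ?ox = ?oy - ?ox + (if op then 1 else 0)" using step.IH oz by auto
    have "\<forall>a. reach S (a + repeat_mset (?cx - ?cz) pt + pr x) (a + repeat_mset (?oz - ?ox) qt + pr z)"
    proof
      fix a
      define a' where "a' = a + (if ip then pt else {#})"
      have r1: "reach S (a' + repeat_mset (?cx - ?cy) pt + pr x) (a' + repeat_mset (?oy - ?ox) qt + pr y)"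
        using step.IH by blast
      have e1: "a' + repeat_mset (?cx - ?cy) pt + pr x = a + repeat_mset (?cx - ?cz) pt + pr x"
        unfolding a'_def c3 by (cases ip) (auto intro!: multiset_eqI)
      have s2: "preset S u \<subseteq># a' + repeat_mset (?oy - ?ox) qt + pr y"
        unfolding preS a'_def subseteq_mset_def using subP by (cases ip) (auto simp: add_le_mono trans_le_add2)
      have e2: "a' + repeat_mset (?oy - ?ox) qt + pr y - preset S u + postset S u
                = a + repeat_mset (?oz - ?ox) qt + pr z"
      proof (rule multiset_eqI)
        fix b
        show "count (a' + repeat_mset (?oy - ?ox) qt + pr y - preset S u + postset S u) b =
              count (a + repeat_mset (?oz - ?ox) qt + pr z) b"
          using subP[of b] prz[of b] unfolding a'_def preS postS c4 by (cases ip; cases op) auto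
      qed
      have "reach S (a' + repeat_mset (?oy - ?ox) qt + pr y) (a + repeat_mset (?oz - ?ox) qt + pr z)"
        using reach_fire[OF uS s2 e2[symmetric]] .
      then show "reach S (a + repeat_mset (?cx - ?cz) pt + pr x) (a + repeat_mset (?oz - ?ox) qt + pr z)"
        using reach_trans[OF r1[unfolded e1]] by blast
    qed
    then show ?case using c1 c2 by blast
  qed
qed

lemma fil_all: "(\<And>x. x \<in># A \<Longrightarrow> P x) \<Longrightarrow> filter_mset P A = A"
  by (induction A) auto
lemma fil_none: "(\<And>x. x \<in># A \<Longrightarrow> \<not> P x) \<Longrightarrow> filter_mset P A = {#}"
  by (induction A) auto

lemma preN_nodes: "x \<in># preset N u \<Longrightarrow> x \<in> nodes N"
  unfolding preset_def nodes_def using flowN by (auto dest!: in_mset_setD)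
lemma postN_nodes: "x \<in># postset N u \<Longrightarrow> x \<in> nodes N"
  unfolding postset_def nodes_def using flowN by (auto dest!: in_mset_setD)
lemma preM_nodes: "x \<in># preset M u \<Longrightarrow> x \<notin> nodes N"
  unfolding preset_def using flowM disj' by (auto simp: nodes_def dest!: in_mset_setD)
lemma postM_nodes: "x \<in># postset M u \<Longrightarrow> x \<notin> nodes N"
  unfolding postset_def using flowM disj' by (auto simp: nodes_def dest!: in_mset_setD)
lemma qt_places: "x \<in># qt \<Longrightarrow> x \<in> places N"
  unfolding postset_def using flowN tT djN by (auto dest!: in_mset_setD)

abbreviation prN :: "'a multiset \<Rightarrow> 'a multiset" where "prN m \<equiv> filter_mset (\<lambda>x. x \<in> nodes N) m"
abbreviation prM :: "'a multiset \<Rightarrow> 'a multiset" where "prM m \<equiv> filter_mset (\<lambda>x. x \<notin> nodes N) m"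

lemma pr_Inl[simp]: "pr (image_mset Inl A) = A"
  by (rule multiset_eqI) simp
lemma pr_Inr[simp]: "pr (replicate_mset n (Inr b)) = {#}" "pr {#Inr b#} = {#}"
  by (rule multiset_eqI, simp)+

lemma stepA:
  assumes "reach S (repeat_mset k (mset_set (inp N))) m"
  shows "\<exists>i j. j \<le> i \<and> reach pc (repeat_mset i {#Inr False#}) (image_mset Inl (prM m) + repeat_mset j {#Inr True#})
     \<and> reach N (repeat_mset k (mset_set (inp N))) (prN m + repeat_mset (i - j) qt)"
proof -
  let ?I = "repeat_mset k (mset_set (inp N))"
  have "(fire_step S)\<^sup>*\<^sup>* ?I m" using assms by (simp add: reach_def)
  then show ?thesis
  proof (induction rule: rtranclp_induct)
    case base
    have "\<And>x. x \<in># ?I \<Longrightarrow> x \<in> nodes N" using inN by (auto simp: nodes_def dest!: in_repD in_mset_setD)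
    then have h1: "prN ?I = ?I" and h2: "prM ?I = {#}" by (auto intro: fil_all fil_none)
    show ?case apply (rule exI[of _ 0], rule exI[of _ 0]) unfolding h1 h2 by (simp add: reach_refl)
  next
    case (step m m2)
    then obtain u where u: "u \<in> trans S" "preset S u \<subseteq># m" "m2 = m - preset S u + postset S u"
      by (auto simp: fire_step_def)
    obtain i j where io: "j \<le> i" "reach pc (repeat_mset i {#Inr False#}) (image_mset Inl (prM m) + repeat_mset j {#Inr True#})"
      "reach N ?I (prN m + repeat_mset (i - j) qt)" using step.IH by blast
    have subm: "\<And>b. count (preset S u) b \<le> count m b" using u(2) by (simp add: subseteq_mset_def)
    show ?case
    proof (cases "u \<in> trans M")
      case False
      then have uN: "u \<in> trans N" "u \<noteq> t" using u(1) by (auto simp: S_simps)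
      define P where "P = preset N u"
      define Q where "Q = postset N u"
      have PS: "preset S u = P" "postset S u = Q" using preS_N[OF uN] postS_N[OF uN] by (simp_all add: P_def Q_def)
      have Pn: "\<And>x. x \<in># P \<Longrightarrow> x \<in> nodes N" "\<And>x. x \<in># Q \<Longrightarrow> x \<in> nodes N"
        using preN_nodes postN_nodes by (auto simp: P_def Q_def)
      have fP: "prN P = P" "prN Q = Q" "prM P = {#}" "prM Q = {#}"
        using Pn by (auto intro: fil_all fil_none)
      have m2M: "prM m2 = prM m" unfolding u(3) PS filter_union_mset filter_diff_mset fP by simp
      have m2N: "prN m2 = prN m - P + Q" unfolding u(3) PS filter_union_mset filter_diff_mset fP by simp
      have subP: "\<And>b. count P b \<le> count (prN m) b"
      proof -
        fix b show "count P b \<le> count (prN m) b"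
          using subm[of b] Pn(1)[of b] by (cases "b \<in> nodes N"; cases "b \<in># P") (auto simp: PS not_in_iff)
      qed
      have "reach N (prN m + repeat_mset (i - j) qt) (prN m2 + repeat_mset (i - j) qt)"
      proof (rule reach_fire[OF uN(1)])
        show "preset N u \<subseteq># prN m + repeat_mset (i - j) qt"
          using subP unfolding P_def subseteq_mset_def by (simp add: trans_le_add1)
        show "prN m2 + repeat_mset (i - j) qt = prN m + repeat_mset (i - j) qt - preset N u + postset N u"
          unfolding m2N P_def[symmetric] Q_def[symmetric] using subP by (auto intro!: multiset_eqI)
      qed
      then have "reach N ?I (prN m2 + repeat_mset (i - j) qt)" using reach_trans[OF io(3)] by blast
      then show ?thesis using io(1) io(2) unfolding m2M by blast
    next
      case True
      note uM = True
      define P where "P = preset M u"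
      define Q where "Q = postset M u"
      define ip where "ip = (u \<in> inp M)"
      define op where "op = (u \<in> out M)"
      have PS: "preset S u = P + (if ip then pt else {#})" "postset S u = Q + (if op then qt else {#})"
        using preS_M[OF uM] postS_M[OF uM] by (simp_all add: P_def Q_def ip_def op_def)
      have fP: "prN P = {#}" "prN Q = {#}" "prM P = P" "prM Q = Q"
        using preM_nodes postM_nodes by (auto simp: P_def Q_def intro: fil_all fil_none)
      have ft: "prN pt = pt" "prN qt = qt" "prM pt = {#}" "prM qt = {#}"
        using preN_nodes postN_nodes by (auto intro: fil_all fil_none)
      have m2M: "prM m2 = prM m - P + Q"
        unfolding u(3) PS filter_union_mset filter_diff_mset fP by (cases ip; cases op) (simp_all add: ft)
      have m2N: "prN m2 = prN m - (if ip then pt else {#}) + (if op then qt else {#})"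
        unfolding u(3) PS filter_union_mset filter_diff_mset fP by (cases ip; cases op) (simp_all add: ft)
      have subP: "\<And>b. count P b \<le> count (prM m) b"
      proof -
        fix b show "count P b \<le> count (prM m) b"
          using subm[of b] preM_nodes[of b u] by (cases "b \<in> nodes N"; cases "b \<in># P"; cases ip) (auto simp: PS P_def not_in_iff)
      qed
      have subt: "ip \<Longrightarrow> count pt b \<le> count (prN m) b" for b
        using subm[of b] preN_nodes[of b t] by (cases "b \<in> nodes N"; cases "b \<in># pt") (auto simp: PS not_in_iff)
      define i' where "i' = i + (if ip then 1 else 0)"
      define j' where "j' = j + (if op then 1 else 0)"
      have prePC': "preset pc (Inl u) = image_mset Inl P + (if ip then {#Inr False#} else {#})"
        using prePC[OF uM] by (simp add: P_def ip_def)
      have postPC': "postset pc (Inl u) = image_mset Inl Q + (if op then {#Inr True#} else {#})"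
        using postPC[OF uM] by (simp add: Q_def op_def)
      let ?X = "image_mset Inl (prM m) + repeat_mset j {#Inr True#} + (if ip then {#Inr False#} else {#})"
      have r1: "reach pc (repeat_mset i' {#Inr False#}) ?X"
      proof -
        have eq: "repeat_mset i {#Inr False#} + (if ip then {#Inr False#} else {#}) = repeat_mset i' {#Inr False#}"
          unfolding i'_def by (auto intro!: multiset_eqI)
        show ?thesis using reach_mono[OF io(2), of "if ip then {#Inr False#} else {#}"] unfolding eq .
      qed
      have r2: "reach pc ?X (image_mset Inl (prM m2) + repeat_mset j' {#Inr True#})"
      proof (rule reach_fire)
        show "Inl u \<in> trans pc" using uM by (simp add: pc_simps)
        show "preset pc (Inl u) \<subseteq># ?X"
          unfolding subseteq_mset_def prePC'
        proof
          fix b show "count (image_mset Inl P + (if ip then {#Inr False#} else {#})) b \<le> count ?X b"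
            using subP by (cases b) (auto)
        qed
        show "image_mset Inl (prM m2) + repeat_mset j' {#Inr True#} = ?X - preset pc (Inl u) + postset pc (Inl u)"
        proof (rule multiset_eqI)
          fix b show "count (image_mset Inl (prM m2) + repeat_mset j' {#Inr True#}) b = count (?X - preset pc (Inl u) + postset pc (Inl u)) b"
            unfolding prePC' postPC' m2M j'_def using subP by (cases b) auto
        qed
      qed
      have pcr: "reach pc (repeat_mset i' {#Inr False#}) (image_mset Inl (prM m2) + repeat_mset j' {#Inr True#})"
        using reach_trans[OF r1 r2] .
      have oi: "j' \<le> i'" using le_io[OF pcr] .
      have nr: "reach N (prN m + repeat_mset (i - j) qt) (prN m2 + repeat_mset (i' - j') qt)"
      proof (cases ip)
        case True
        show ?thesis
        proof (rule reach_fire[OF tT])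
          show "pt \<subseteq># prN m + repeat_mset (i - j) qt"
            using subt True unfolding subseteq_mset_def by (simp add: trans_le_add1)
          have "i' - j' = Suc (i - j) - (if op then 1 else 0)" using io(1) True by (simp add: i'_def j'_def)
          then show "prN m2 + repeat_mset (i' - j') qt = prN m + repeat_mset (i - j) qt - pt + qt"
            unfolding m2N using subt True by (cases op) (auto intro!: multiset_eqI)
        qed
      next
        case False
        have e: "prN m2 + repeat_mset (i' - j') qt = prN m + repeat_mset (i - j) qt"
        proof (cases op)
          case True
          then have "i - j = Suc (i' - j')" using oi False by (simp add: i'_def j'_def)
          then show ?thesis unfolding m2N using False True by (auto intro!: multiset_eqI)
        next
          case f2: False
          then show ?thesis unfolding m2N using False by (simp add: i'_def j'_def)
        qed
        show ?thesis unfolding e by (rule reach_refl)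
      qed
      show ?thesis using oi pcr reach_trans[OF io(3) nr] by blast
    qed
  qed
qed

lemma subH: "\<forall>k k' m'. k' \<le> k \<longrightarrow> set_mset m' \<subseteq> places pc \<longrightarrow>
       reach pc (repeat_mset k (mset_set {Inr False})) (m' + repeat_mset k' (mset_set {Inr True})) \<longrightarrow>
       reach pc m' (repeat_mset (k - k') (mset_set {Inr True}))"
  using sM unfolding tWF_sub_sound_def sub_sound_def pc_simps .

lemma t_sim: "reach S (a + pt) (a + qt)"
proof -
  have "reach pc {#Inr False#} (repeat_mset (1 - 0) (mset_set {Inr True}))"
    using subH[rule_format, of 0 1 "{#Inr False#}"] by (simp add: pc_simps reach_refl)
  then have "reach pc {#Inr False#} {#Inr True#}" by simp
  from lift[OF this] show ?thesis by simp
qed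

lemma liftN: "reach N x y \<Longrightarrow> reach S x y"
  unfolding reach_def[of N]
proof (induction rule: rtranclp_induct)
  case base then show ?case by (rule reach_refl)
next
  case (step y z)
  then obtain u where u: "u \<in> trans N" "preset N u \<subseteq># y" "z = y - preset N u + postset N u"
    by (auto simp: fire_step_def)
  have "reach S y z"
  proof (cases "u = t")
    case True
    have "y - pt + pt = y" using u(2) True by simp
    then show ?thesis using t_sim[of "y - pt"] u(3) True by simp
  next
    case False
    then show ?thesis using u preS_N[OF u(1) False] postS_N[OF u(1) False]
      by (intro reach_fire[of u]) (auto simp: S_simps)
  qed
  then show ?case using step.IH reach_trans by blast
qed

theorem main: "sub_sound S"
  unfolding sub_sound_def S_simps
proof (intro allI impI)
  fix k k' :: nat and m'
  assume kk: "k' \<le> k" and pl: "set_mset m' \<subseteq> places N \<union> places M"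
    and r: "reach S (repeat_mset k (mset_set (inp N))) (m' + repeat_mset k' (mset_set (out N)))"
  let ?O = "repeat_mset k' (mset_set (out N))"
  obtain i j where io: "j \<le> i" "reach pc (repeat_mset i {#Inr False#}) (image_mset Inl (prM (m' + ?O)) + repeat_mset j {#Inr True#})"
     "reach N (repeat_mset k (mset_set (inp N))) (prN (m' + ?O) + repeat_mset (i - j) qt)"
    using stepA[OF r] by blast
  have On: "\<And>x. x \<in># ?O \<Longrightarrow> x \<in> nodes N" using outN by (auto simp: nodes_def dest!: in_repD in_mset_setD)
  then have h1: "prN ?O = ?O" and h2: "prM ?O = {#}" by (auto intro: fil_all fil_none)
  have e1: "prM (m' + ?O) = prM m'" unfolding filter_union_mset h2 by simp
  have e2: "prN (m' + ?O) = prN m' + ?O" unfolding filter_union_mset h1 by simp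
  have "set_mset (image_mset Inl (prM m')) \<subseteq> places pc"
    using pl by (auto simp: pc_simps nodes_def)
  then have "reach pc (image_mset Inl (prM m')) (repeat_mset (i - j) (mset_set {Inr True}))"
    using subH io(1,2) unfolding e1 by simp
  then have "reach pc (image_mset Inl (prM m')) (repeat_mset (i - j) {#Inr True#})" by simp
  from lift[OF this] have "\<forall>a. reach S (a + prM m') (a + repeat_mset (i - j) qt)"
    by simp
  then have "reach S (prN m' + prM m') (prN m' + repeat_mset (i - j) qt)" by blast
  moreover have "prN m' + prM m' = m'" using multiset_partition[of m' "\<lambda>x. x \<in> nodes N"] by simp
  ultimately have r1: "reach S m' (prN m' + repeat_mset (i - j) qt)" by simp
  have "set_mset (prN m' + repeat_mset (i - j) qt) \<subseteq> places N"
    using pl qt_places djN disj' by (auto simp: nodes_def dest!: in_repD)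
  moreover have "reach N (repeat_mset k (mset_set (inp N))) (prN m' + repeat_mset (i - j) qt + ?O)"
    using io(3) unfolding e2 by (simp add: ac_simps)
  ultimately have "reach N (prN m' + repeat_mset (i - j) qt) (repeat_mset (k - k') (mset_set (out N)))"
    using sN kk unfolding sub_sound_def by blast
  from reach_trans[OF r1 liftN[OF this]]
  show "reach S m' (repeat_mset (k - k') (mset_set (out N)))" .
qed

end

theorem mainTheorem13:
  fixes N M :: "'a wfnet" and t :: 'a
  assumes "pWF N" and "sub_sound N"
    and "tWF M" and "tWF_sub_sound M"
    and "nodes N \<inter> nodes M = {}"
    and "t \<in> trans N"
  shows "sub_sound (subst_trans N t M)"
proof -
  interpret ctx N M t using assms by unfold_locales
  show ?thesis by (rule main)
qed

end
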